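(* Let $\Omega$ be a set and let $G=H\times K\leq{\rm Sym}(\Omega)$ be finite, the internal direct product of subgroups $H,K$ with $\gcd(|H|,|K|)=1$, and suppose $H$ is abelian. Let $\overline{\Omega}=\{\alpha^H\mid\alpha\in\Omega\}$ be the set of $H$-orbits, on which $K$ acts by $(\alpha^H)^k=(\alpha^k)^H$. Suppose $H^{(2),\Omega}=H$ and $K^{(2),\overline{\Omega}}=K$. Then $G^{(2),\Omega}=G$.
   Context: Permutations act on the right. For $X\leq{\rm Sym}(\Omega)$, the $2$-closure of $X$ on $\Omega$ is $X^{(2),\Omega}=\{\theta\in{\rm Sym}(\Omega)\mid \forall \alpha,\beta\in\Omega\ \exists g\in X:\ \alpha^\theta=\alpha^g,\ \beta^\theta=\beta^g\}$. Here $K^{(2),\overline{\Omega}}$ is the $2$-closure on $\overline{\Omega}$ of the permutation group induced by $K$ on $\overline{\Omega}$, and $K^{(2),\overline{\Omega}}=K$ means that this induced group coincides with its $2$-closure (with $K$ identified with its image). *)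

theory Defs
  imports "HOL-Combinatorics.Permutations"
begin

(* Permutations act on the right: alpha^g is written g alpha, so the product
   g h (first g, then h) is the function h \<circ> g. *)

definition perm_group :: "'a set \<Rightarrow> ('a \<Rightarrow> 'a) set \<Rightarrow> bool" where
  "perm_group \<Omega> X \<longleftrightarrow> X \<subseteq> {p. p permutes \<Omega>} \<and> id \<in> X \<and>
     (\<forall>g\<in>X. \<forall>h\<in>X. h \<circ> g \<in> X) \<and> (\<forall>g\<in>X. inv g \<in> X)"

definition two_closure :: "'a set \<Rightarrow> ('a \<Rightarrow> 'a) set \<Rightarrow> ('a \<Rightarrow> 'a) set" where
  "two_closure \<Omega> X = {\<theta>. \<theta> permutes \<Omega> \<and>
     (\<forall>\<alpha>\<in>\<Omega>. \<forall>\<beta>\<in>\<Omega>. \<exists>g\<in>X. \<theta> \<alpha> = g \<alpha> \<and> \<theta> \<beta> = g \<beta>)}"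

definition internal_direct_product ::
  "'a set \<Rightarrow> ('a \<Rightarrow> 'a) set \<Rightarrow> ('a \<Rightarrow> 'a) set \<Rightarrow> ('a \<Rightarrow> 'a) set \<Rightarrow> bool" where
  "internal_direct_product \<Omega> G H K \<longleftrightarrow>
     perm_group \<Omega> G \<and> perm_group \<Omega> H \<and> perm_group \<Omega> K \<and> H \<subseteq> G \<and> K \<subseteq> G \<and>
     (\<forall>g\<in>G. \<forall>h\<in>H. inv g \<circ> h \<circ> g \<in> H) \<and>
     (\<forall>g\<in>G. \<forall>k\<in>K. inv g \<circ> k \<circ> g \<in> K) \<and>
     H \<inter> K = {id} \<and> G = {k \<circ> h | h k. h \<in> H \<and> k \<in> K}"

definition orbit :: "('a \<Rightarrow> 'a) set \<Rightarrow> 'a \<Rightarrow> 'a set" where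
  "orbit H \<alpha> = {h \<alpha> | h. h \<in> H}"

definition orbits :: "'a set \<Rightarrow> ('a \<Rightarrow> 'a) set \<Rightarrow> 'a set set" where
  "orbits \<Omega> H = {orbit H \<alpha> | \<alpha>. \<alpha> \<in> \<Omega>}"

definition induced_perm :: "'a set set \<Rightarrow> ('a \<Rightarrow> 'a) \<Rightarrow> 'a set \<Rightarrow> 'a set" where
  "induced_perm \<Delta> k = (\<lambda>B. if B \<in> \<Delta> then k ` B else B)"

definition induced_group :: "'a set set \<Rightarrow> ('a \<Rightarrow> 'a) set \<Rightarrow> ('a set \<Rightarrow> 'a set) set" where
  "induced_group \<Delta> K = induced_perm \<Delta> ` K"

end

theory Submission
  imports Defs "HOL-Algebra.Multiplicative_Group"
begin

no_notation m_inv (\<open>(\<open>open_block notation=\<open>prefix inv\<close>\<close>inv\<index> _)\<close> [81] 80)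

lemma pg_funpow_closed:
  assumes "perm_group \<Omega> X" "x \<in> X" shows "x ^^ n \<in> X"
  using assms by (induction n) (auto simp: perm_group_def funpow_Suc_right)

lemma pg_pow_card:
  fixes X :: "('a \<Rightarrow> 'a) set"
  assumes pg: "perm_group \<Omega> X" and fin: "finite X" and x: "x \<in> X"
  shows "x ^^ card X = id"
proof -
  define Gr :: "('a \<Rightarrow> 'a) monoid" where "Gr = \<lparr>carrier = X, monoid.mult = (\<lambda>a b. a \<circ> b), one = id\<rparr>"
  have perm: "\<And>a. a \<in> X \<Longrightarrow> a permutes \<Omega>" using pg by (auto simp: perm_group_def)
  have gr: "group Gr"
  proof (rule groupI)
    fix a b assume "a \<in> carrier Gr" "b \<in> carrier Gr"
    then show "a \<otimes>\<^bsub>Gr\<^esub> b \<in> carrier Gr" using pg by (auto simp: Gr_def perm_group_def)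
  next
    show "\<one>\<^bsub>Gr\<^esub> \<in> carrier Gr" using pg by (auto simp: Gr_def perm_group_def)
  next
    fix a b c show "a \<otimes>\<^bsub>Gr\<^esub> b \<otimes>\<^bsub>Gr\<^esub> c = a \<otimes>\<^bsub>Gr\<^esub> (b \<otimes>\<^bsub>Gr\<^esub> c)"
      by (simp add: Gr_def o_assoc)
  next
    fix a show "\<one>\<^bsub>Gr\<^esub> \<otimes>\<^bsub>Gr\<^esub> a = a" by (simp add: Gr_def)
  next
    fix a assume "a \<in> carrier Gr"
    then have "a \<in> X" by (simp add: Gr_def)
    then show "\<exists>y\<in>carrier Gr. y \<otimes>\<^bsub>Gr\<^esub> a = \<one>\<^bsub>Gr\<^esub>"
      using pg perm[of a] permutes_inv_o(2)[of a \<Omega>]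
      by (auto simp: Gr_def perm_group_def intro!: bexI[of _ "inv a"])
  qed
  have pw: "\<And>n. x [^]\<^bsub>Gr\<^esub> (n::nat) = x ^^ n"
  proof -
    fix n show "x [^]\<^bsub>Gr\<^esub> (n::nat) = x ^^ n"
    proof (induction n)
      case 0 then show ?case by (simp add: Gr_def nat_pow_def)
    next
      case (Suc n) then show ?case
        by (simp add: Gr_def nat_pow_def fun_eq_iff funpow_swap1)
    qed
  qed
  have "x [^]\<^bsub>Gr\<^esub> order Gr = \<one>\<^bsub>Gr\<^esub>"
    using group.pow_order_eq_1[OF gr] x by (simp add: Gr_def)
  then show ?thesis using pw by (simp add: Gr_def order_def)
qed


locale dpsetup =
  fixes \<Omega> :: "'a set" and G H K :: "('a \<Rightarrow> 'a) set"
  assumes fin: "finite G"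
    and idp: "internal_direct_product \<Omega> G H K"
    and cop: "coprime (card H) (card K)"
    and ab: "\<forall>h1\<in>H. \<forall>h2\<in>H. h1 \<circ> h2 = h2 \<circ> h1"
begin

lemma pgG: "perm_group \<Omega> G" and pgH: "perm_group \<Omega> H" and pgK: "perm_group \<Omega> K"
  and HG: "H \<subseteq> G" and KG: "K \<subseteq> G"
  and nH: "\<And>g h. g \<in> G \<Longrightarrow> h \<in> H \<Longrightarrow> inv g \<circ> h \<circ> g \<in> H"
  and nK: "\<And>g k. g \<in> G \<Longrightarrow> k \<in> K \<Longrightarrow> inv g \<circ> k \<circ> g \<in> K"
  and HK: "H \<inter> K = {id}"
  and Gdef: "G = {k \<circ> h | h k. h \<in> H \<and> k \<in> K}"
  using idp unfolding internal_direct_product_def by auto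

lemma finH: "finite H" and finK: "finite K"
  using fin HG KG finite_subset by auto

lemma perm_of: "perm_group \<Omega> X \<Longrightarrow> x \<in> X \<Longrightarrow> x permutes \<Omega>"
  by (auto simp: perm_group_def)

lemma permG: "g \<in> G \<Longrightarrow> g permutes \<Omega>" using perm_of[OF pgG] .
lemma permH: "h \<in> H \<Longrightarrow> h permutes \<Omega>" using perm_of[OF pgH] .
lemma permK: "k \<in> K \<Longrightarrow> k permutes \<Omega>" using perm_of[OF pgK] .

lemma compH: "a \<in> H \<Longrightarrow> b \<in> H \<Longrightarrow> b \<circ> a \<in> H" using pgH by (auto simp: perm_group_def)
lemma compK: "a \<in> K \<Longrightarrow> b \<in> K \<Longrightarrow> b \<circ> a \<in> K" using pgK by (auto simp: perm_group_def)
lemma compG: "a \<in> G \<Longrightarrow> b \<in> G \<Longrightarrow> b \<circ> a \<in> G" using pgG by (auto simp: perm_group_def)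
lemma invH: "a \<in> H \<Longrightarrow> inv a \<in> H" using pgH by (auto simp: perm_group_def)
lemma invK: "a \<in> K \<Longrightarrow> inv a \<in> K" using pgK by (auto simp: perm_group_def)
lemma idH: "id \<in> H" using pgH by (auto simp: perm_group_def)

lemma comm_HK:
  assumes h: "h \<in> H" and k: "k \<in> K" shows "k \<circ> h = h \<circ> k"
proof -
  define c where "c = inv k \<circ> (inv h \<circ> k \<circ> h)"
  have "inv h \<circ> k \<circ> h \<in> K" using nK[of h k] h k HG by auto
  then have cK: "c \<in> K" unfolding c_def using compK invK k by auto
  have "inv k \<circ> inv h \<circ> k \<in> H" using nH[of k "inv h"] h k KG invH by auto
  then have "(inv k \<circ> inv h \<circ> k) \<circ> h \<in> H" using compH h by auto
  then have cH: "c \<in> H" unfolding c_def by (simp add: o_assoc)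
  have "c = id" using cK cH HK by auto
  then have c1: "\<And>x. inv k (inv h (k (h x))) = x" unfolding c_def by (metis comp_apply id_apply)
  have ph: "h permutes \<Omega>" and pk: "k permutes \<Omega>" using permH[OF h] permK[OF k] .
  show ?thesis
  proof
    fix x
    have "k (h x) = h (k (inv k (inv h (k (h x)))))"
      using permutes_inverses[OF ph] permutes_inverses[OF pk] by simp
    then show "(k \<circ> h) x = (h \<circ> k) x" using c1 by simp
  qed
qed

lemma Gdecomp: "g \<in> G \<Longrightarrow> \<exists>h k. g = k \<circ> h \<and> h \<in> H \<and> k \<in> K"
  using Gdef by auto

lemma comm_GH:
  assumes g: "g \<in> G" and h: "h \<in> H" shows "g \<circ> h = h \<circ> g"
proof -
  obtain h0 k where g: "g = k \<circ> h0" "h0 \<in> H" "k \<in> K" using Gdecomp[OF g] by blast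
  have "h0 \<circ> h = h \<circ> h0" using ab h g(2) by blast
  then have "k \<circ> h0 \<circ> h = k \<circ> (h \<circ> h0)" by (metis comp_assoc)
  also have "\<dots> = (k \<circ> h) \<circ> h0" by (simp add: o_assoc)
  also have "\<dots> = h \<circ> k \<circ> h0" using comm_HK[OF h g(3)] by simp
  finally show ?thesis using g by (simp add: o_assoc)
qed

lemma orbit_G:
  assumes g: "g \<in> G" shows "g ` orbit H \<alpha> = orbit H (g \<alpha>)"
proof -
  have "\<And>h. h \<in> H \<Longrightarrow> g (h \<alpha>) = h (g \<alpha>)" using comm_GH[OF g] by (metis comp_apply)
  then show ?thesis unfolding orbit_def by (auto simp: image_iff) (metis)
qed

lemma orbit_self: "\<alpha> \<in> orbit H \<alpha>"
  using idH unfolding orbit_def by (metis (mono_tags, lifting) id_apply mem_Collect_eq)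

lemma orbit_back:
  assumes h: "h \<in> H" and x: "h x \<in> orbit H \<alpha>" shows "x \<in> orbit H \<alpha>"
proof -
  obtain h1 where h1: "h1 \<in> H" "h x = h1 \<alpha>" using x unfolding orbit_def by auto
  have "x = inv h (h x)" using permutes_inverses(2)[OF permH[OF h]] by simp
  also have "\<dots> = (inv h \<circ> h1) \<alpha>" using h1 by simp
  finally show ?thesis using compH[OF h1(1) invH[OF h]] unfolding orbit_def by blast
qed

lemma orbit_H:
  assumes h: "h \<in> H" shows "orbit H (h y) = orbit H y"
proof
  show "orbit H (h y) \<subseteq> orbit H y" unfolding orbit_def
    using compH[OF h] by (auto, metis comp_apply)
  show "orbit H y \<subseteq> orbit H (h y)" unfolding orbit_def
  proof (auto)
    fix h1 assume h1: "h1 \<in> H"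
    have "h1 y = (h1 \<circ> inv h) (h y)" using permutes_inverses(2)[OF permH[OF h]] by simp
    then show "\<exists>h2. h1 y = h2 (h y) \<and> h2 \<in> H" using compH[OF invH[OF h] h1] by blast
  qed
qed

lemma key:
  assumes k: "k \<in> K" and a: "k \<alpha> \<in> orbit H \<alpha>" shows "k \<alpha> = \<alpha>"
proof -
  obtain h0 where h0: "h0 \<in> H" "k \<alpha> = h0 \<alpha>" using a unfolding orbit_def by auto
  have pw: "(k ^^ n) \<alpha> = (h0 ^^ n) \<alpha>" for n
  proof (induction n)
    case 0 then show ?case by simp
  next
    case (Suc n)
    have hn: "h0 ^^ n \<in> H" using pg_funpow_closed[OF pgH h0(1)] .
    have "(k ^^ Suc n) \<alpha> = k ((h0 ^^ n) \<alpha>)" using Suc by simp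
    also have "\<dots> = (h0 ^^ n) (k \<alpha>)" using comm_HK[OF hn k] by (metis comp_apply)
    also have "\<dots> = (h0 ^^ Suc n) \<alpha>" using h0(2) by (simp add: funpow_swap1)
    finally show ?case .
  qed
  define a where "a = card K"
  define b where "b = card H"
  have ka: "k ^^ a = id" unfolding a_def using pg_pow_card[OF pgK finK k] .
  have hb: "h0 ^^ b = id" unfolding b_def using pg_pow_card[OF pgH finH h0(1)] .
  have kb: "(k ^^ b) \<alpha> = \<alpha>" using pw[of b] hb by simp
  have "a \<noteq> 0" unfolding a_def using finK pgK by (auto simp: perm_group_def)
  then obtain x y where xy: "a * x = b * y + gcd a b" using bezout_nat by blast
  have "gcd a b = 1" using cop unfolding a_def b_def by (simp add: gcd.commute)
  with xy have xy1: "a * x = 1 + b * y" by simp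
  have "(k ^^ (a * x)) \<alpha> = \<alpha>" by (simp add: funpow_mult[symmetric] ka)
  moreover have "(k ^^ (b * y)) \<alpha> = \<alpha>"
  proof -
    have "\<And>m. ((k ^^ b) ^^ m) \<alpha> = \<alpha>"
    proof -
      fix m show "((k ^^ b) ^^ m) \<alpha> = \<alpha>" by (induction m) (simp_all add: kb)
    qed
    then show ?thesis by (simp add: funpow_mult)
  qed
  moreover have "(k ^^ (1 + b * y)) \<alpha> = k ((k ^^ (b * y)) \<alpha>)" by (simp add: funpow_add)
  ultimately show ?thesis using xy1 by simp
qed

end

theorem mainTheorem5:
  fixes \<Omega> :: "'a set" and G H K :: "('a \<Rightarrow> 'a) set"
  assumes "finite G"
    and "internal_direct_product \<Omega> G H K"
    and "coprime (card H) (card K)"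
    and "\<forall>h1\<in>H. \<forall>h2\<in>H. h1 \<circ> h2 = h2 \<circ> h1"
    and "two_closure \<Omega> H = H"
    and "two_closure (orbits \<Omega> H) (induced_group (orbits \<Omega> H) K)
           = induced_group (orbits \<Omega> H) K"
  shows "two_closure \<Omega> G = G"
proof -
  interpret dpsetup \<Omega> G H K using assms(1-4) by unfold_locales
  show ?thesis
  proof
    show "G \<subseteq> two_closure \<Omega> G" unfolding two_closure_def using permG by blast
    show "two_closure \<Omega> G \<subseteq> G"
    proof
      fix \<theta> assume th: "\<theta> \<in> two_closure \<Omega> G"
      then have pth: "\<theta> permutes \<Omega>"
        and agr: "\<And>\<alpha> \<beta>. \<alpha> \<in> \<Omega> \<Longrightarrow> \<beta> \<in> \<Omega> \<Longrightarrow> \<exists>g\<in>G. \<theta> \<alpha> = g \<alpha> \<and> \<theta> \<beta> = g \<beta>"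
        by (auto simp: two_closure_def)
      define \<Delta> where "\<Delta> = orbits \<Omega> H"
      have orb\<Omega>: "\<And>\<alpha>. \<alpha> \<in> \<Omega> \<Longrightarrow> orbit H \<alpha> \<subseteq> \<Omega>"
      proof
        fix \<alpha> x assume a: "\<alpha> \<in> \<Omega>" and "x \<in> orbit H \<alpha>"
        then obtain h where "h \<in> H" "x = h \<alpha>" unfolding orbit_def by auto
        then show "x \<in> \<Omega>" using permutes_in_image[OF permH[of h]] a by simp
      qed
      have th\<Omega>: "\<And>x. x \<in> \<Omega> \<Longrightarrow> \<theta> x \<in> \<Omega>" using permutes_in_image[OF pth] by simp
      have s1: "\<And>\<alpha>. \<alpha> \<in> \<Omega> \<Longrightarrow> \<theta> ` orbit H \<alpha> = orbit H (\<theta> \<alpha>)"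
      proof
        fix \<alpha> assume \<alpha>: "\<alpha> \<in> \<Omega>"
        show "\<theta> ` orbit H \<alpha> \<subseteq> orbit H (\<theta> \<alpha>)"
        proof
          fix \<delta> assume "\<delta> \<in> \<theta> ` orbit H \<alpha>"
          then obtain \<gamma> where \<gamma>: "\<gamma> \<in> orbit H \<alpha>" "\<delta> = \<theta> \<gamma>" by auto
          have \<gamma>\<Omega>: "\<gamma> \<in> \<Omega>" using \<gamma> orb\<Omega> \<alpha> by auto
          obtain g where g: "g \<in> G" "\<theta> \<alpha> = g \<alpha>" "\<theta> \<gamma> = g \<gamma>" using agr[OF \<alpha> \<gamma>\<Omega>] by auto
          show "\<delta> \<in> orbit H (\<theta> \<alpha>)" using \<gamma> g orbit_G[OF g(1), of \<alpha>] by auto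
        qed
        show "orbit H (\<theta> \<alpha>) \<subseteq> \<theta> ` orbit H \<alpha>"
        proof
          fix \<delta> assume d: "\<delta> \<in> orbit H (\<theta> \<alpha>)"
          then have d\<Omega>: "\<delta> \<in> \<Omega>" using orb\<Omega> th\<Omega>[OF \<alpha>] by auto
          define \<gamma> where "\<gamma> = inv \<theta> \<delta>"
          have \<gamma>\<Omega>: "\<gamma> \<in> \<Omega>" using d\<Omega> permutes_in_image[OF permutes_inv[OF pth]] \<gamma>_def by auto
          have d\<gamma>: "\<delta> = \<theta> \<gamma>" using permutes_inverses(1)[OF pth] \<gamma>_def by simp
          obtain g where g: "g \<in> G" "\<theta> \<alpha> = g \<alpha>" "\<theta> \<gamma> = g \<gamma>" using agr[OF \<alpha> \<gamma>\<Omega>] by auto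
          have "g \<gamma> \<in> g ` orbit H \<alpha>" using d d\<gamma> g orbit_G[OF g(1), of \<alpha>] by auto
          then have "\<gamma> \<in> orbit H \<alpha>" using permutes_inj[OF permG[OF g(1)]]
            by (auto simp: inj_image_mem_iff)
          then show "\<delta> \<in> \<theta> ` orbit H \<alpha>" using d\<gamma> by auto
        qed
      qed
      have s2: "induced_perm \<Delta> \<theta> \<in> two_closure \<Delta> (induced_group \<Delta> K)"
      proof -
        have bij: "bij_betw (induced_perm \<Delta> \<theta>) \<Delta> \<Delta>"
        proof (rule bij_betw_imageI)
          show "inj_on (induced_perm \<Delta> \<theta>) \<Delta>"
            by (rule inj_onI) (use permutes_inj[OF pth] in \<open>auto simp: induced_perm_def inj_image_eq_iff\<close>)
          show "induced_perm \<Delta> \<theta> ` \<Delta> = \<Delta>"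
          proof
            show "induced_perm \<Delta> \<theta> ` \<Delta> \<subseteq> \<Delta>"
              using s1 th\<Omega> by (auto simp: induced_perm_def \<Delta>_def orbits_def) blast
            show "\<Delta> \<subseteq> induced_perm \<Delta> \<theta> ` \<Delta>"
            proof
              fix B assume "B \<in> \<Delta>"
              then obtain \<gamma> where \<gamma>: "\<gamma> \<in> \<Omega>" "B = orbit H \<gamma>" by (auto simp: \<Delta>_def orbits_def)
              define \<alpha> where "\<alpha> = inv \<theta> \<gamma>"
              have \<alpha>: "\<alpha> \<in> \<Omega>" "\<theta> \<alpha> = \<gamma>"
                using \<gamma> permutes_in_image[OF permutes_inv[OF pth]] permutes_inverses(1)[OF pth] \<alpha>_def
                by auto
              have oa: "orbit H \<alpha> \<in> \<Delta>" using \<alpha> by (auto simp: \<Delta>_def orbits_def)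
              moreover have "induced_perm \<Delta> \<theta> (orbit H \<alpha>) = B"
                using oa s1[OF \<alpha>(1)] \<alpha> \<gamma> by (simp add: induced_perm_def)
              ultimately show "B \<in> induced_perm \<Delta> \<theta> ` \<Delta>" by force
            qed
          qed
        qed
        have perm: "induced_perm \<Delta> \<theta> permutes \<Delta>"
          by (rule bij_imp_permutes[OF bij]) (simp add: induced_perm_def)
        have "\<forall>B1\<in>\<Delta>. \<forall>B2\<in>\<Delta>. \<exists>f\<in>induced_group \<Delta> K.
                induced_perm \<Delta> \<theta> B1 = f B1 \<and> induced_perm \<Delta> \<theta> B2 = f B2"
        proof (intro ballI)
          fix B1 B2 assume B1: "B1 \<in> \<Delta>" and B2: "B2 \<in> \<Delta>"
          obtain \<alpha> where \<alpha>: "\<alpha> \<in> \<Omega>" "B1 = orbit H \<alpha>" using B1 by (auto simp: \<Delta>_def orbits_def)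
          obtain \<beta> where \<beta>: "\<beta> \<in> \<Omega>" "B2 = orbit H \<beta>" using B2 by (auto simp: \<Delta>_def orbits_def)
          obtain g where g: "g \<in> G" "\<theta> \<alpha> = g \<alpha>" "\<theta> \<beta> = g \<beta>" using agr[OF \<alpha>(1) \<beta>(1)] by auto
          obtain h k where hk: "g = k \<circ> h" "h \<in> H" "k \<in> K" using Gdecomp[OF g(1)] by blast
          have e: "\<And>x. orbit H (g x) = orbit H (k x)"
          proof -
            fix x
            have "g x = h (k x)" using comm_HK[OF hk(2) hk(3)] hk(1) by (metis comp_apply)
            then show "orbit H (g x) = orbit H (k x)" using orbit_H[OF hk(2)] by simp
          qed
          have kK: "induced_perm \<Delta> k \<in> induced_group \<Delta> K" using hk(3) by (simp add: induced_group_def)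
          have "\<And>x B. x \<in> \<Omega> \<Longrightarrow> B = orbit H x \<Longrightarrow> B \<in> \<Delta> \<Longrightarrow> \<theta> x = g x \<Longrightarrow>
                 induced_perm \<Delta> \<theta> B = induced_perm \<Delta> k B"
          proof -
            fix x B assume x: "x \<in> \<Omega>" "B = orbit H x" "B \<in> \<Delta>" "\<theta> x = g x"
            have kG: "k \<in> G" using KG hk(3) by blast
            have "induced_perm \<Delta> \<theta> B = orbit H (g x)" using x s1 by (simp add: induced_perm_def)
            also have "\<dots> = k ` B" using e orbit_G[OF kG] x by simp
            finally show "induced_perm \<Delta> \<theta> B = induced_perm \<Delta> k B" using x by (simp add: induced_perm_def)
          qed
          then show "\<exists>f\<in>induced_group \<Delta> K.
                induced_perm \<Delta> \<theta> B1 = f B1 \<and> induced_perm \<Delta> \<theta> B2 = f B2"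
            using kK \<alpha> \<beta> g B1 B2 by blast
        qed
        then show ?thesis using perm unfolding two_closure_def by blast
      qed
      then obtain k where k: "k \<in> K" "induced_perm \<Delta> \<theta> = induced_perm \<Delta> k"
        using assms(6) unfolding \<Delta>_def induced_group_def by auto
      have pk: "k permutes \<Omega>" using permK[OF k(1)] .
      have s3: "\<And>\<alpha>. \<alpha> \<in> \<Omega> \<Longrightarrow> \<theta> ` orbit H \<alpha> = k ` orbit H \<alpha>"
      proof -
        fix \<alpha> assume \<alpha>: "\<alpha> \<in> \<Omega>"
        then have "orbit H \<alpha> \<in> \<Delta>" by (auto simp: \<Delta>_def orbits_def)
        then show "\<theta> ` orbit H \<alpha> = k ` orbit H \<alpha>"
          using fun_cong[OF k(2), of "orbit H \<alpha>"] by (simp add: induced_perm_def)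
      qed
      define \<theta>' where "\<theta>' = inv k \<circ> \<theta>"
      have s4: "\<And>\<alpha>. \<alpha> \<in> \<Omega> \<Longrightarrow> \<theta>' \<alpha> \<in> orbit H \<alpha>"
      proof -
        fix \<alpha> assume \<alpha>: "\<alpha> \<in> \<Omega>"
        have "\<theta> \<alpha> \<in> k ` orbit H \<alpha>" using s3[OF \<alpha>] orbit_self by blast
        then obtain \<gamma> where "\<gamma> \<in> orbit H \<alpha>" "\<theta> \<alpha> = k \<gamma>" by auto
        then show "\<theta>' \<alpha> \<in> orbit H \<alpha>" using permutes_inverses(2)[OF pk] \<theta>'_def by simp
      qed
      have p\<theta>': "\<theta>' permutes \<Omega>" unfolding \<theta>'_def
        using permutes_compose[OF pth permutes_inv[OF pk]] .
      have "\<theta>' \<in> two_closure \<Omega> H"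
        unfolding two_closure_def
      proof (intro CollectI conjI ballI p\<theta>')
        fix \<alpha> \<beta> assume \<alpha>: "\<alpha> \<in> \<Omega>" and \<beta>: "\<beta> \<in> \<Omega>"
        obtain g where g: "g \<in> G" "\<theta> \<alpha> = g \<alpha>" "\<theta> \<beta> = g \<beta>" using agr[OF \<alpha> \<beta>] by auto
        obtain h k' where hk: "g = k' \<circ> h" "h \<in> H" "k' \<in> K" using Gdecomp[OF g(1)] by blast
        define k'' where "k'' = inv k \<circ> k'"
        have k''K: "k'' \<in> K" unfolding k''_def using compK[OF hk(3) invK[OF k(1)]] .
        have gen: "\<And>x. x \<in> \<Omega> \<Longrightarrow> \<theta> x = g x \<Longrightarrow> \<theta>' x = h x"
        proof -
          fix x assume x: "x \<in> \<Omega>" "\<theta> x = g x"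
          have e1: "\<theta>' x = k'' (h x)" using x hk \<theta>'_def k''_def by simp
          also have "\<dots> = h (k'' x)" using comm_HK[OF hk(2) k''K] by (metis comp_apply)
          finally have e2: "\<theta>' x = h (k'' x)" .
          then have "h (k'' x) \<in> orbit H x" using s4[OF x(1)] by metis
          then have "k'' x \<in> orbit H x" using orbit_back hk(2) by blast
          then have "k'' x = x" using key k''K by blast
          then show "\<theta>' x = h x" using e2 by simp
        qed
        show "\<exists>g\<in>H. \<theta>' \<alpha> = g \<alpha> \<and> \<theta>' \<beta> = g \<beta>" using gen \<alpha> \<beta> g hk by blast
      qed
      then have "\<theta>' \<in> H" using assms(5) by simp
      moreover have "\<theta> = k \<circ> \<theta>'" using permutes_inv_o(1)[OF pk] \<theta>'_def
        by (simp add: o_assoc)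
      ultimately show "\<theta> \<in> G" using Gdef k(1) by blast
    qed
  qed
qed

end
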